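(* Let $S$ be a subcartesian space and $\mathcal{F}$ a family of vector fields on $S$. Then the function $\delta_{\mathcal{F}}:S\to\mathbb{Z}$, $\delta_{\mathcal{F}}(x)=\dim\check T^{\mathcal{F}}_xS$, is lower semicontinuous.
   Context: A subcartesian space is a paracompact, second-countable, Hausdorff differential space $(S,C^\infty(S))$ locally diffeomorphic to differential subspaces of Euclidean spaces. The (Zariski) tangent space $T_xS$ is the vector space of linear maps $v:C^\infty(S)\to\mathbb{R}$ with $v(fg)=f(x)v(g)+g(x)v(f)$. A derivation of $C^\infty(S)$ is a linear $X:C^\infty(S)\to C^\infty(S)$ satisfying Leibniz's rule; $X|_x(f):=(Xf)(x)$. Every derivation $X$ has, through each $x$, a unique maximal integral curve $t\mapsto\exp(tX)(x)$ (a smooth map from a maximal interval $I^X_x\ni0$ with $\frac{d}{dt}(f\circ\exp(tX)(x))=(Xf)(\exp(tX)(x))$). $X$ is a vector field if $(t,x)\mapsto\exp(tX)(x)$ is a local flow, i.e. its domain $\{(t,x):t\in I^X_x\}$ is open in $\mathbb{R}\times S$. For a family $\mathcal{F}$ of vector fields, $\check T^{\mathcal{F}}_xS$ is the linear span of $\{X|_x: X\in\mathcal{F}\}$ in $T_xS$. *)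

theory Defs
  imports "HOL-Analysis.Analysis" "HOL-Library.Function_Algebras"
begin

text \<open>R^n is represented inside nat => real as the vectors vanishing from index n on.\<close>
definition fvec :: "nat \<Rightarrow> (nat \<Rightarrow> real) set" where
  "fvec n = {x. \<forall>i\<ge>n. x i = 0}"

definition partial :: "nat \<Rightarrow> ((nat \<Rightarrow> real) \<Rightarrow> real) \<Rightarrow> (nat \<Rightarrow> real) \<Rightarrow> real" where
  "partial i F x = deriv (\<lambda>t. F (x(i := t))) (x i)"

fun Ck :: "nat \<Rightarrow> nat \<Rightarrow> ((nat \<Rightarrow> real) \<Rightarrow> real) set" where
  "Ck n 0 = {F. continuous_on (fvec n) F}"
| "Ck n (Suc k) = {F. continuous_on (fvec n) F \<and>
      (\<forall>i<n. \<forall>x\<in>fvec n. (\<lambda>t. F (x(i := t))) differentiable (at (x i))) \<and>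
      (\<forall>i<n. partial i F \<in> Ck n k)}"

definition smooth_fun :: "nat \<Rightarrow> ((nat \<Rightarrow> real) \<Rightarrow> real) \<Rightarrow> bool" where
  "smooth_fun n F \<longleftrightarrow> (\<forall>k. F \<in> Ck n k)"

definition real_smooth :: "(real \<Rightarrow> real) \<Rightarrow> bool" where
  "real_smooth F \<longleftrightarrow> (\<forall>k t. (deriv ^^ k) F differentiable (at t))"

definition rn_fun :: "nat \<Rightarrow> (nat \<Rightarrow> real) set \<Rightarrow> ((nat \<Rightarrow> real) \<Rightarrow> real) \<Rightarrow> bool" where
  "rn_fun n Q g \<longleftrightarrow> (\<forall>y\<in>Q. \<exists>W G. open W \<and> y \<in> W \<and> smooth_fun n G \<and> (\<forall>z\<in>W \<inter> Q. g z = G z))"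

definition loc_real :: "real set \<Rightarrow> (real \<Rightarrow> real) \<Rightarrow> bool" where
  "loc_real I g \<longleftrightarrow> (\<forall>s\<in>I. \<exists>W G. open W \<and> s \<in> W \<and> real_smooth G \<and> (\<forall>z\<in>W \<inter> I. g z = G z))"

section \<open>Differential spaces (carrier = UNIV of the point type)\<close>

definition ctop :: "('a \<Rightarrow> real) set \<Rightarrow> 'a topology" where
  "ctop C = topology_generated_by (insert UNIV {f -` V | f V. f \<in> C \<and> open V})"

definition differential_space :: "('a \<Rightarrow> real) set \<Rightarrow> bool" where
  "differential_space C \<longleftrightarrow>
     (\<forall>n (f :: nat \<Rightarrow> 'a \<Rightarrow> real) G. (\<forall>i<n. f i \<in> C) \<and> smooth_fun n G \<longrightarrow>
        (\<lambda>p. G (\<lambda>i. if i < n then f i p else 0)) \<in> C) \<and>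
     (\<forall>h. (\<forall>x. \<exists>U f. openin (ctop C) U \<and> x \<in> U \<and> f \<in> C \<and> (\<forall>y\<in>U. h y = f y)) \<longrightarrow> h \<in> C)"

definition loc_fun :: "('a \<Rightarrow> real) set \<Rightarrow> 'a set \<Rightarrow> ('a \<Rightarrow> real) \<Rightarrow> bool" where
  "loc_fun C U h \<longleftrightarrow> (\<forall>y\<in>U. \<exists>W f. openin (ctop C) W \<and> y \<in> W \<and> f \<in> C \<and> (\<forall>z\<in>W \<inter> U. h z = f z))"

definition paracompact :: "'a topology \<Rightarrow> bool" where
  "paracompact X \<longleftrightarrow>
     (\<forall>\<U>. (\<forall>U\<in>\<U>. openin X U) \<and> \<Union>\<U> = topspace X \<longrightarrow>
        (\<exists>\<V>. (\<forall>V\<in>\<V>. openin X V) \<and> \<Union>\<V> = topspace X \<and> (\<forall>V\<in>\<V>. \<exists>U\<in>\<U>. V \<subseteq> U)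
              \<and> locally_finite_in X \<V>))"

definition subcartesian :: "('a \<Rightarrow> real) set \<Rightarrow> bool" where
  "subcartesian C \<longleftrightarrow> differential_space C \<and> paracompact (ctop C) \<and>
     second_countable (ctop C) \<and> Hausdorff_space (ctop C) \<and>
     (\<forall>x. \<exists>U (\<phi> :: 'a \<Rightarrow> nat \<Rightarrow> real) n. openin (ctop C) U \<and> x \<in> U \<and>
          \<phi> ` U \<subseteq> fvec n \<and> inj_on \<phi> U \<and>
          (\<forall>g. rn_fun n (\<phi> ` U) g \<longrightarrow> loc_fun C U (g \<circ> \<phi>)) \<and>
          (\<forall>h. loc_fun C U h \<longrightarrow> rn_fun n (\<phi> ` U) (h \<circ> inv_into U \<phi>)))"

definition derivation :: "('a \<Rightarrow> real) set \<Rightarrow> (('a \<Rightarrow> real) \<Rightarrow> ('a \<Rightarrow> real)) \<Rightarrow> bool" where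
  "derivation C X \<longleftrightarrow> (\<forall>f\<in>C. X f \<in> C) \<and>
     (\<forall>f\<in>C. \<forall>g\<in>C. \<forall>a b. X (\<lambda>p. a * f p + b * g p) = (\<lambda>p. a * X f p + b * X g p)) \<and>
     (\<forall>f\<in>C. \<forall>g\<in>C. X (\<lambda>p. f p * g p) = (\<lambda>p. f p * X g p + g p * X f p))"

definition integral_curve :: "('a \<Rightarrow> real) set \<Rightarrow> (('a \<Rightarrow> real) \<Rightarrow> ('a \<Rightarrow> real)) \<Rightarrow> real set \<Rightarrow> (real \<Rightarrow> 'a) \<Rightarrow> bool" where
  "integral_curve C X I c \<longleftrightarrow> is_interval I \<and> 0 \<in> I \<and>
     (\<forall>f\<in>C. loc_real I (f \<circ> c) \<and>
        (\<forall>t\<in>I. ((f \<circ> c) has_real_derivative X f (c t)) (at t within I)))"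

definition max_dom :: "('a \<Rightarrow> real) set \<Rightarrow> (('a \<Rightarrow> real) \<Rightarrow> ('a \<Rightarrow> real)) \<Rightarrow> 'a \<Rightarrow> real set" where
  "max_dom C X x = \<Union>{I. \<exists>c. integral_curve C X I c \<and> c 0 = x}"

definition vector_field :: "('a \<Rightarrow> real) set \<Rightarrow> (('a \<Rightarrow> real) \<Rightarrow> ('a \<Rightarrow> real)) \<Rightarrow> bool" where
  "vector_field C X \<longleftrightarrow> derivation C X \<and>
     openin (prod_topology euclideanreal (ctop C)) {(t, x). t \<in> max_dom C X x}"

definition tvec :: "('a \<Rightarrow> real) set \<Rightarrow> (('a \<Rightarrow> real) \<Rightarrow> ('a \<Rightarrow> real)) \<Rightarrow> 'a \<Rightarrow> ('a \<Rightarrow> real) \<Rightarrow> real" where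
  "tvec C X x = (\<lambda>f. if f \<in> C then X f x else 0)"

definition delta :: "('a \<Rightarrow> real) set \<Rightarrow> (('a \<Rightarrow> real) \<Rightarrow> ('a \<Rightarrow> real)) set \<Rightarrow> 'a \<Rightarrow> int" where
  "delta C F x = int (vector_space.dim (\<lambda>(a::real) v. \<lambda>f. a * v f) {tvec C X x | X. X \<in> F})"

definition lower_semicontinuous :: "'a topology \<Rightarrow> ('a \<Rightarrow> int) \<Rightarrow> bool" where
  "lower_semicontinuous T d \<longleftrightarrow>
     (\<forall>x\<in>topspace T. \<forall>r::real. r < real_of_int (d x) \<longrightarrow>
        (\<exists>U. openin T U \<and> x \<in> U \<and> (\<forall>y\<in>U. r < real_of_int (d y))))"

end

theory Submission
  imports Defs
begin



lemma ctop_topspace [simp]: "topspace (ctop C) = UNIV"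
  unfolding ctop_def by auto

lemma ctop_open_basic: "f \<in> C \<Longrightarrow> open V \<Longrightarrow> openin (ctop C) (f -` V)"
  unfolding ctop_def openin_topology_generated_by_iff
  by (rule generate_topology_on.Basis) blast

lemma ctop_open_UNIV: "openin (ctop C) UNIV"
  using openin_topspace[of "ctop C"] by simp

lemma continuous_C: "f \<in> C \<Longrightarrow> continuous_map (ctop C) euclideanreal f"
  unfolding continuous_map_def by (simp add: ctop_open_basic[unfolded vimage_def])

lemma eventually_in_open:
  assumes lim: "\<forall>f\<in>C. ((\<lambda>t. f (c t)) \<longlongrightarrow> f y) Fi"
    and W: "openin (ctop C) W" and y: "y \<in> W"
  shows "\<forall>\<^sub>F t in Fi. c t \<in> W"
proof -
  have "generate_topology_on (insert UNIV {f -` V | f V. f \<in> C \<and> open V}) W"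
    using W unfolding ctop_def openin_topology_generated_by_iff .
  then show ?thesis using y
  proof (induction rule: generate_topology_on.induct)
    case Empty then show ?case by simp
  next
    case (Int a b) then show ?case by (auto intro: eventually_conj)
  next
    case (UN K)
    then obtain k where "k \<in> K" "y \<in> k" by auto
    with UN have "\<forall>\<^sub>F t in Fi. c t \<in> k" by auto
    then show ?case by (rule eventually_mono) (use \<open>k \<in> K\<close> in auto)
  next
    case (Basis s)
    then show ?case
    proof (cases "s = UNIV")
      case False
      with Basis obtain f V where fV: "s = f -` V" "f \<in> C" "open V" by auto
      with Basis have "f y \<in> V" by auto
      from topological_tendstoD[OF bspec[OF lim fV(2)] fV(3) this]
      show ?thesis by (simp add: fV(1))
    qed simp
  qed
qed

lemma tendsto_fun_coord:
  fixes Q :: "'b \<Rightarrow> 'i \<Rightarrow> 'c::topological_space"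
  assumes "\<And>i. ((\<lambda>t. Q t i) \<longlongrightarrow> q i) F"
  shows "(Q \<longlongrightarrow> q) F"
proof (rule topological_tendstoI)
  fix U assume U: "open U" "q \<in> U"
  then have "openin (product_topology (\<lambda>i. euclidean) UNIV) U" by (simp add: open_fun_def)
  from product_topology_open_contains_basis[OF this U(2)] obtain X where
    X: "q \<in> (\<Pi>\<^sub>E i\<in>UNIV. X i)" "\<forall>i. open (X i)" "finite {i. X i \<noteq> UNIV}" "(\<Pi>\<^sub>E i\<in>UNIV. X i) \<subseteq> U"
    by auto
  have qX: "\<And>i. q i \<in> X i" using X(1) by (auto simp: PiE_def Pi_def)
  have "\<forall>i\<in>{i. X i \<noteq> UNIV}. \<forall>\<^sub>F t in F. Q t i \<in> X i"
    using qX X(2) assms topological_tendstoD by blast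
  from eventually_ball_finite[OF X(3) this]
  show "\<forall>\<^sub>F t in F. Q t \<in> U"
  proof (rule eventually_mono)
    fix t assume "\<forall>i\<in>{i. X i \<noteq> UNIV}. Q t i \<in> X i"
    then have "Q t \<in> (\<Pi>\<^sub>E i\<in>UNIV. X i)" by (auto simp: PiE_def)
    then show "Q t \<in> U" using X(4) by auto
  qed
qed



lemma sum_elim: "(\<Sum>j\<in>A. a j * (p j - q j / c * d::real)) = (\<Sum>j\<in>A. a j * p j) - (\<Sum>j\<in>A. a j * q j) / c * d"
proof -
  have "(\<Sum>j\<in>A. a j * (p j - q j / c * d)) = (\<Sum>j\<in>A. a j * p j - a j * q j / c * d)"
    by (rule sum.cong) (simp_all add: algebra_simps)
  also have "\<dots> = (\<Sum>j\<in>A. a j * p j) - (\<Sum>j\<in>A. a j * q j / c * d)"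
    by (rule sum_subtractf)
  also have "(\<Sum>j\<in>A. a j * q j / c * d) = (\<Sum>j\<in>A. a j * q j) / c * d"
    by (simp add: sum_distrib_right sum_divide_distrib)
  finally show ?thesis .
qed

lemma indep_open:
  fixes T :: "'a topology" and w :: "nat \<Rightarrow> 'a \<Rightarrow> 'b \<Rightarrow> real"
  assumes "openin T Om" "x \<in> Om"
    and "\<forall>j<k. \<forall>f\<in>D. continuous_map (subtopology T Om) euclideanreal (\<lambda>y. w j y f)"
    and "\<forall>a. (\<forall>f\<in>D. (\<Sum>j<k. a j * w j x f) = 0) \<longrightarrow> (\<forall>j<k. a j = 0)"
  shows "\<exists>U. openin T U \<and> x \<in> U \<and> (\<forall>y\<in>U. \<forall>a. (\<forall>f\<in>D. (\<Sum>j<k. a j * w j y f) = 0) \<longrightarrow> (\<forall>j<k. a j = 0))"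
  using assms
proof (induction k arbitrary: w Om)
  case 0
  then show ?case by blast
next
  case (Suc k)
  have "\<exists>g\<in>D. w k x g \<noteq> 0"
  proof (rule ccontr)
    assume "\<not> ?thesis"
    then have "\<forall>f\<in>D. (\<Sum>j<Suc k. (if j = k then 1 else 0) * w j x f) = 0" by simp
    with Suc.prems(4)[THEN spec, of "\<lambda>j. if j = k then 1 else 0"]
    have H: "\<forall>j<Suc k. (if j = k then (1::real) else 0) = 0" by simp
    from H[rule_format, of k] show False by simp
  qed
  then obtain g where g: "g \<in> D" "w k x g \<noteq> 0" by blast
  define Om1 where "Om1 = {y \<in> topspace (subtopology T Om). w k y g \<in> -{0}}"
  have contk: "continuous_map (subtopology T Om) euclideanreal (\<lambda>y. w k y g)"
    using Suc.prems(3) g by auto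
  have "openin (subtopology T Om) Om1"
    unfolding Om1_def by (rule openin_continuous_map_preimage[OF contk]) auto
  then have Om1: "openin T Om1" using Suc.prems(1) openin_trans_full by blast
  have Om1O: "Om1 \<subseteq> Om" unfolding Om1_def by auto
  have xOm1: "x \<in> Om1" unfolding Om1_def using Suc.prems(1,2) g openin_subset by fastforce
  have nz: "\<And>y. y \<in> Om1 \<Longrightarrow> w k y g \<noteq> 0" unfolding Om1_def by auto
  define w' where "w' j y f = w j y f - w j y g / w k y g * w k y f" for j y f
  have cont': "\<forall>j<k. \<forall>f\<in>D. continuous_map (subtopology T Om1) euclideanreal (\<lambda>y. w' j y f)"
  proof (intro allI impI ballI)
    fix j f assume j: "j < k" and f: "f \<in> D"
    have c: "\<And>j f. j < Suc k \<Longrightarrow> f \<in> D \<Longrightarrow> continuous_map (subtopology T Om1) euclideanreal (\<lambda>y. w j y f)"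
      using Suc.prems(3) continuous_map_from_subtopology_mono Om1O by blast
    have "continuous_map (subtopology T Om1) euclideanreal (\<lambda>y. w j y g / w k y g)"
      by (rule continuous_map_real_divide) (use c j g nz in auto)
    then show "continuous_map (subtopology T Om1) euclideanreal (\<lambda>y. w' j y f)"
      unfolding w'_def using c j f g
      by (intro continuous_map_diff continuous_map_real_mult) auto
  qed
  have ind': "\<forall>a. (\<forall>f\<in>D. (\<Sum>j<k. a j * w' j x f) = 0) \<longrightarrow> (\<forall>j<k. a j = 0)"
  proof (rule allI, rule impI)
    fix a assume H: "\<forall>f\<in>D. (\<Sum>j<k. a j * w' j x f) = 0"
    define a' where "a' j = (if j < k then a j else - (\<Sum>j<k. a j * w j x g) / w k x g)" for j
    have "\<forall>f\<in>D. (\<Sum>j<Suc k. a' j * w j x f) = 0"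
    proof
      fix f assume f: "f \<in> D"
      have "(\<Sum>j<Suc k. a' j * w j x f) = (\<Sum>j<k. a j * w j x f) - (\<Sum>j<k. a j * w j x g) / w k x g * w k x f"
        by (simp add: a'_def)
      also have "\<dots> = (\<Sum>j<k. a j * w' j x f)" unfolding w'_def sum_elim ..
      finally show "(\<Sum>j<Suc k. a' j * w j x f) = 0" using H f by simp
    qed
    with Suc.prems(4) have "\<forall>j<Suc k. a' j = 0" by blast
    then show "\<forall>j<k. a j = 0"
    proof (intro allI impI)
      fix j assume "\<forall>j<Suc k. a' j = 0" "j < k"
      then have "a' j = 0" by simp
      with \<open>j < k\<close> show "a j = 0" by (simp add: a'_def)
    qed
  qed
  from Suc.IH[OF Om1 xOm1 cont' ind'] obtain U where
    U: "openin T U" "x \<in> U" "\<forall>y\<in>U. \<forall>a. (\<forall>f\<in>D. (\<Sum>j<k. a j * w' j y f) = 0) \<longrightarrow> (\<forall>j<k. a j = 0)"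
    by blast
  show ?case
  proof (intro exI conjI ballI allI impI)
    show "openin T (U \<inter> Om1)" using U(1) Om1 by blast
    show "x \<in> U \<inter> Om1" using U(2) xOm1 by blast
    fix y a j assume y: "y \<in> U \<inter> Om1" and H: "\<forall>f\<in>D. (\<Sum>j<Suc k. a j * w j y f) = 0" and j: "j < Suc k"
    have wy: "w k y g \<noteq> 0" using nz y by blast
    have "(\<Sum>j<k. a j * w j y g) + a k * w k y g = 0" using H g by simp
    then have ak: "a k = - (\<Sum>j<k. a j * w j y g) / w k y g" using wy by (simp add: field_simps)
    have "\<forall>f\<in>D. (\<Sum>j<k. a j * w' j y f) = 0"
    proof
      fix f assume f: "f \<in> D"
      have "(\<Sum>j<k. a j * w' j y f) = (\<Sum>j<k. a j * w j y f) - (\<Sum>j<k. a j * w j y g) / w k y g * w k y f"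
        unfolding w'_def sum_elim ..
      also have "\<dots> = (\<Sum>j<Suc k. a j * w j y f)" by (simp add: ak)
      finally show "(\<Sum>j<k. a j * w' j y f) = 0" using H f by simp
    qed
    with U(3) y have a0: "\<forall>j<k. a j = 0" by blast
    then have "a k = 0" using ak by simp
    with a0 j show "a j = 0" using less_Suc_eq by auto
  qed
qed



lemma Ck_const: "(\<lambda>z. c) \<in> Ck n k"
proof (induction k arbitrary: c)
  case 0 then show ?case by simp
next
  case (Suc k)
  have p: "partial i (\<lambda>z. c) = (\<lambda>z. 0)" for i
    unfolding partial_def by (auto intro!: ext DERIV_imp_deriv)
  show ?case using Suc by (simp add: p)
qed

lemma Ck_proj: "(\<lambda>z. z m) \<in> Ck n k"
proof (cases k)
  case 0 then show ?thesis
    by (simp add: continuous_on_subset[OF continuous_on_product_coordinates])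
next
  case (Suc k')
  have p: "partial i (\<lambda>z. z m) = (\<lambda>z. if i = m then 1 else 0)" for i
    unfolding partial_def
  proof (rule ext)
    fix x :: "nat \<Rightarrow> real"
    show "deriv (\<lambda>t. (x(i := t)) m) (x i) = (if i = m then 1 else 0)"
    proof (cases "i = m")
      case True
      then show ?thesis by (simp add: DERIV_imp_deriv[OF DERIV_ident])
    next
      case False
      then show ?thesis by (simp add: DERIV_imp_deriv[OF DERIV_const])
    qed
  qed
  have d: "(\<lambda>t. if m = i then t else x m) differentiable (at s)" for x :: "nat \<Rightarrow> real" and i s
    by (cases "m = i") auto
  show ?thesis using Suc
    by (simp add: p d Ck_const continuous_on_subset[OF continuous_on_product_coordinates])
qed

lemma smooth_proj: "smooth_fun n (\<lambda>z. z m)"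
  unfolding smooth_fun_def using Ck_proj by blast

lemma mvt_between:
  fixes h :: "real \<Rightarrow> real"
  assumes "\<And>s. (h has_real_derivative h' s) (at s)"
  shows "\<exists>\<xi>. min a b \<le> \<xi> \<and> \<xi> \<le> max a b \<and> h b - h a = (b - a) * h' \<xi>"
proof (cases a b rule: linorder_cases)
  case less
  from MVT2[OF less assms] show ?thesis by (metis less less_imp_le max.absorb2 min.absorb1)
next
  case equal then show ?thesis by auto
next
  case greater
  from MVT2[OF greater assms] obtain z where "z > b" "z < a" "h a - h b = (a - b) * h' z" by blast
  then show ?thesis
    by (intro exI[of _ z]) (auto simp: algebra_simps)
qed

lemma chain_C1:
  fixes G :: "(nat \<Rightarrow> real) \<Rightarrow> real" and \<Phi> :: "real \<Rightarrow> nat \<Rightarrow> real"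
  assumes G: "G \<in> Ck n (Suc 0)"
    and \<Phi>n: "\<And>t. \<Phi> t \<in> fvec n"
    and d: "\<And>i. i < n \<Longrightarrow> ((\<lambda>t. \<Phi> t i) has_real_derivative d i) (at 0 within J)"
  shows "((\<lambda>t. G (\<Phi> t)) has_real_derivative (\<Sum>i<n. partial i G (\<Phi> 0) * d i)) (at 0 within J)"
proof -
  have Gdiff: "\<And>i x. i < n \<Longrightarrow> x \<in> fvec n \<Longrightarrow> (\<lambda>t. G (x(i := t))) differentiable (at (x i))"
    and Gpc: "\<And>i. i < n \<Longrightarrow> continuous_on (fvec n) (partial i G)"
    using G by auto
  define P where "P m t = (\<lambda>i. if i < m then \<Phi> t i else \<Phi> 0 i)" for m t
  have Pn: "P m t \<in> fvec n" for m t
    using \<Phi>n unfolding P_def fvec_def by auto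
  have P0: "P m 0 = \<Phi> 0" for m unfolding P_def by auto
  have contc: "((\<lambda>t. \<Phi> t i) \<longlongrightarrow> \<Phi> 0 i) (at 0 within J)" for i
  proof (cases "i < n")
    case True
    from DERIV_continuous[OF d[OF True]] show ?thesis by (simp add: continuous_within)
  next
    case False
    then have "\<Phi> t i = 0" for t using \<Phi>n unfolding fvec_def by auto
    then show ?thesis by simp
  qed
  have main: "m \<le> n \<Longrightarrow> ((\<lambda>t. G (P m t)) has_real_derivative (\<Sum>i<m. partial i G (\<Phi> 0) * d i)) (at 0 within J)" for m
  proof (induction m)
    case 0
    have "P 0 t = \<Phi> 0" for t unfolding P_def by auto
    then show ?case by simp
  next
    case (Suc m)
    then have mn: "m < n" by simp
    have IH: "((\<lambda>t. (G (P m t) - G (P m 0)) / (t - 0)) \<longlongrightarrow> (\<Sum>i<m. partial i G (\<Phi> 0) * d i)) (at 0 within J)"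
      using Suc.IH Suc.prems has_field_derivative_iff by fastforce
    have Psuc: "P (Suc m) t = (P m t)(m := \<Phi> t m)" for t
      unfolding P_def by auto
    have Pm: "P m t m = \<Phi> 0 m" for t unfolding P_def by auto
    define pm where "pm = partial m G"
    have hder: "((\<lambda>u. G (z(m := u))) has_real_derivative pm (z(m := s))) (at s)" if z: "z \<in> fvec n" for z s
    proof -
      have zs: "z(m := s) \<in> fvec n" using z mn unfolding fvec_def by auto
      from Gdiff[OF mn zs] have "(\<lambda>u. G (z(m := u))) differentiable (at s)" by simp
      then have "((\<lambda>u. G (z(m := u))) has_real_derivative deriv (\<lambda>u. G (z(m := u))) s) (at s)"
        using DERIV_deriv_iff_real_differentiable by blast
      moreover have "deriv (\<lambda>u. G (z(m := u))) s = pm (z(m := s))"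
        unfolding pm_def partial_def by simp
      ultimately show ?thesis by simp
    qed
    have "\<forall>t. \<exists>\<xi>. min (\<Phi> 0 m) (\<Phi> t m) \<le> \<xi> \<and> \<xi> \<le> max (\<Phi> 0 m) (\<Phi> t m) \<and>
        G ((P m t)(m := \<Phi> t m)) - G ((P m t)(m := \<Phi> 0 m)) = (\<Phi> t m - \<Phi> 0 m) * pm ((P m t)(m := \<xi>))"
      using mvt_between[OF hder[OF Pn]] by blast
    then obtain \<xi> where \<xi>: "\<And>t. min (\<Phi> 0 m) (\<Phi> t m) \<le> \<xi> t" "\<And>t. \<xi> t \<le> max (\<Phi> 0 m) (\<Phi> t m)"
      "\<And>t. G ((P m t)(m := \<Phi> t m)) - G ((P m t)(m := \<Phi> 0 m)) = (\<Phi> t m - \<Phi> 0 m) * pm ((P m t)(m := \<xi> t))"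
      by metis
    have Pmm: "(P m t)(m := \<Phi> 0 m) = P m t" for t using Pm by (metis fun_upd_triv)
    define Q where "Q t = (P m t)(m := \<xi> t)" for t
    have D: "G (P (Suc m) t) - G (P m t) = (\<Phi> t m - \<Phi> 0 m) * pm (Q t)" for t
      using \<xi>(3)[of t] by (simp add: Psuc Pmm Q_def)
    have Qn: "Q t \<in> fvec n" for t
      using Pn[of m t] mn unfolding Q_def fvec_def by auto
    have Q0: "\<Phi> 0 \<in> fvec n" by (rule \<Phi>n)
    have mnl: "((\<lambda>t. min (\<Phi> 0 m) (\<Phi> t m)) \<longlongrightarrow> \<Phi> 0 m) (at 0 within J)"
      using tendsto_min[OF tendsto_const contc[of m], of "\<Phi> 0 m"] by simp
    have mxl: "((\<lambda>t. max (\<Phi> 0 m) (\<Phi> t m)) \<longlongrightarrow> \<Phi> 0 m) (at 0 within J)"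
      using tendsto_max[OF tendsto_const contc[of m], of "\<Phi> 0 m"] by simp
    have \<xi>lim: "(\<xi> \<longlongrightarrow> \<Phi> 0 m) (at 0 within J)"
    proof (rule tendsto_sandwich[OF _ _ mnl mxl])
      show "\<forall>\<^sub>F t in at 0 within J. min (\<Phi> 0 m) (\<Phi> t m) \<le> \<xi> t" using \<xi>(1) by simp
      show "\<forall>\<^sub>F t in at 0 within J. \<xi> t \<le> max (\<Phi> 0 m) (\<Phi> t m)" using \<xi>(2) by simp
    qed
    have Qlim: "(Q \<longlongrightarrow> \<Phi> 0) (at 0 within J)"
    proof (rule tendsto_fun_coord)
      fix i
      show "((\<lambda>t. Q t i) \<longlongrightarrow> \<Phi> 0 i) (at 0 within J)"
      proof (cases "i = m")
        case True then show ?thesis using \<xi>lim by (simp add: Q_def)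
      next
        case False
        then show ?thesis
        proof (cases "i < m")
          case True
          with False show ?thesis using contc[of i] by (simp add: Q_def P_def)
        next
          case F2: False
          with False show ?thesis by (simp add: Q_def P_def)
        qed
      qed
    qed
    have pmlim: "((\<lambda>t. pm (Q t)) \<longlongrightarrow> pm (\<Phi> 0)) (at 0 within J)"
      using continuous_on_tendsto_compose[OF Gpc[OF mn, folded pm_def] Qlim Q0] Qn by simp
    have dm: "((\<lambda>t. (\<Phi> t m - \<Phi> 0 m) / (t - 0)) \<longlongrightarrow> d m) (at 0 within J)"
      using d[OF mn] unfolding has_field_derivative_iff .
    have lim2: "((\<lambda>t. (G (P (Suc m) t) - G (P m t)) / (t - 0)) \<longlongrightarrow> pm (\<Phi> 0) * d m) (at 0 within J)"
    proof -
      have eq: "(\<lambda>t. pm (Q t) * ((\<Phi> t m - \<Phi> 0 m) / (t - 0))) = (\<lambda>t. (G (P (Suc m) t) - G (P m t)) / (t - 0))"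
        by (rule ext) (simp only: D times_divide_eq_right mult.commute)
      show ?thesis using tendsto_mult[OF pmlim dm] unfolding eq .
    qed
    have "((\<lambda>t. (G (P m t) - G (P m 0)) / (t - 0) + (G (P (Suc m) t) - G (P m t)) / (t - 0))
           \<longlongrightarrow> (\<Sum>i<m. partial i G (\<Phi> 0) * d i) + pm (\<Phi> 0) * d m) (at 0 within J)"
      by (rule tendsto_add[OF IH lim2])
    moreover have "(G (P m t) - G (P m 0)) / (t - 0) + (G (P (Suc m) t) - G (P m t)) / (t - 0)
        = (G (P (Suc m) t) - G (P (Suc m) 0)) / (t - 0)" for t
      by (simp add: P0 diff_divide_distrib)
    ultimately show ?case
      by (simp add: has_field_derivative_iff pm_def)
  qed
  have "P n t = \<Phi> t" for t
    using \<Phi>n unfolding P_def fvec_def by (auto simp: fun_eq_iff)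
  with main[of n] show ?thesis by simp
qed




lemma deriv_pow_const: "\<exists>c'. (deriv ^^ k) (\<lambda>_::real. c::real) = (\<lambda>_. c')"
proof (induction k)
  case 0 then show ?case by auto
next
  case (Suc k)
  then obtain c' where "(deriv ^^ k) (\<lambda>_::real. c) = (\<lambda>_. c')" by blast
  then have "(deriv ^^ Suc k) (\<lambda>_::real. c) = (\<lambda>_. 0)"
    by (auto intro!: ext DERIV_imp_deriv)
  then show ?case by blast
qed

lemma real_smooth_const: "real_smooth (\<lambda>_. c)"
  unfolding real_smooth_def
proof (intro allI)
  fix k t
  obtain c' where "(deriv ^^ k) (\<lambda>_::real. c) = (\<lambda>_. c')" using deriv_pow_const by blast
  then show "(deriv ^^ k) (\<lambda>_. c) differentiable at t" by simp
qed

lemma const_curve: "integral_curve C X {0} (\<lambda>_. y)"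
  unfolding integral_curve_def
proof (intro conjI ballI)
  show "is_interval {0::real}" unfolding is_interval_1 by auto
  show "(0::real) \<in> {0}" by simp
  fix f assume "f \<in> C"
  show "loc_real {0} (f \<circ> (\<lambda>_. y))"
    unfolding loc_real_def
    by (intro ballI exI[of _ UNIV] exI[of _ "\<lambda>_. f y"]) (auto simp: real_smooth_const)
  fix t :: real assume "t \<in> {0}"
  then show "((f \<circ> (\<lambda>_. y)) has_real_derivative X f ((\<lambda>_. y) t)) (at t within {0})"
    by (simp add: has_field_derivative_def has_derivative_within_singleton_iff bounded_linear_mult_right)
qed

lemma get_curve:
  assumes "vector_field C X"
  shows "\<exists>e c. e > 0 \<and> c 0 = y \<and> (\<forall>f\<in>C. \<forall>t\<in>{0..e}. ((\<lambda>t. f (c t)) has_real_derivative X f (c t)) (at t within {0..e}))"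
proof -
  have op: "openin (prod_topology euclideanreal (ctop C)) {(t, x). t \<in> max_dom C X x}"
    using assms unfolding vector_field_def by blast
  have "(0::real) \<in> max_dom C X y"
    unfolding max_dom_def using const_curve[of C X y] by blast
  then have "(0::real, y) \<in> {(t, x). t \<in> max_dom C X x}" by simp
  from op[unfolded openin_prod_topology_alt, rule_format, OF this]
  obtain U V where UV: "openin euclideanreal U" "openin (ctop C) V" "0 \<in> U" "y \<in> V"
    "U \<times> V \<subseteq> {(t, x). t \<in> max_dom C X x}"
    by blast
  have "open U" using UV(1) by (simp only: open_openin)
  then obtain e where e: "e > 0" "ball 0 e \<subseteq> U"
    using UV(3) open_contains_ball_eq by blast
  then have "e/2 \<in> U" by (auto simp: dist_real_def)
  with UV(4,5) have "e/2 \<in> max_dom C X y" by blast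
  then obtain I c where Ic: "integral_curve C X I c" "c 0 = y" "e/2 \<in> I"
    unfolding max_dom_def by blast
  have II: "is_interval I" "0 \<in> I" using Ic(1) unfolding integral_curve_def by auto
  have JI: "{0..e/2} \<subseteq> I"
  proof
    fix t assume "t \<in> {0..e/2}"
    then show "t \<in> I" using mem_is_interval_1_I[OF II(1) II(2) Ic(3)] by auto
  qed
  show ?thesis
  proof (intro exI conjI ballI)
    show "e/2 > 0" using e by simp
    show "c 0 = y" by fact
    fix f t assume f: "f \<in> C" and t: "t \<in> {0..e/2}"
    then have "((f \<circ> c) has_real_derivative X f (c t)) (at t within I)"
      using Ic(1) JI unfolding integral_curve_def by blast
    then show "((\<lambda>t. f (c t)) has_real_derivative X f (c t)) (at t within {0..e/2})"
      using DERIV_subset[OF _ JI] by (simp add: o_def)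
  qed
qed



interpretation fs: vector_space "\<lambda>(a::real) (v::('b \<Rightarrow> real) \<Rightarrow> real) f. a * v f"
  by unfold_locales (auto simp: fun_eq_iff algebra_simps)

lemma fun_sum_apply: "(\<Sum>a\<in>A. g a) x = (\<Sum>a\<in>A. g a x)"
  by (induction A rule: infinite_finite_induct) auto

lemma tangent_rel:
  assumes sc: "subcartesian C"
  shows "\<exists>E. finite E \<and> (\<forall>X. vector_field C X \<longrightarrow> tvec C X y \<in> fs.span E)"
proof -
  from sc obtain U \<phi> n where ch: "openin (ctop C) U" "y \<in> U" "\<phi> ` U \<subseteq> fvec n" "inj_on \<phi> U"
    "\<And>g. rn_fun n (\<phi> ` U) g \<Longrightarrow> loc_fun C U (g \<circ> \<phi>)"
    "\<And>h. loc_fun C U h \<Longrightarrow> rn_fun n (\<phi> ` U) (h \<circ> inv_into U \<phi>)"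
    unfolding subcartesian_def by metis
  have "\<forall>i. \<exists>p. i < n \<longrightarrow> (openin (ctop C) (fst p) \<and> y \<in> fst p \<and> snd p \<in> C \<and> (\<forall>z\<in>fst p \<inter> U. snd p z = \<phi> z i))"
  proof (intro allI)
    fix i
    have "rn_fun n (\<phi> ` U) (\<lambda>z. z i)"
      unfolding rn_fun_def using smooth_proj[of n i] by (intro ballI exI[of _ UNIV] exI[of _ "\<lambda>z. z i"]) auto
    from ch(5)[OF this] ch(2) obtain W f where "openin (ctop C) W" "y \<in> W" "f \<in> C" "\<forall>z\<in>W \<inter> U. f z = \<phi> z i"
      unfolding loc_fun_def by (auto simp: o_def)
    then show "\<exists>p. i < n \<longrightarrow> (openin (ctop C) (fst p) \<and> y \<in> fst p \<and> snd p \<in> C \<and> (\<forall>z\<in>fst p \<inter> U. snd p z = \<phi> z i))"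
      by (intro exI[of _ "(W, f)"]) auto
  qed
  then obtain pc where pc: "\<And>i. i < n \<Longrightarrow> openin (ctop C) (fst (pc i)) \<and> y \<in> fst (pc i) \<and> snd (pc i) \<in> C \<and> (\<forall>z\<in>fst (pc i) \<inter> U. snd (pc i) z = \<phi> z i)"
    by metis
  define Wc where "Wc i = fst (pc i)" for i
  define fc where "fc i = snd (pc i)" for i
  have Wc: "\<And>i. i < n \<Longrightarrow> openin (ctop C) (Wc i)" "\<And>i. i < n \<Longrightarrow> y \<in> Wc i"
    and fc: "\<And>i. i < n \<Longrightarrow> fc i \<in> C" "\<And>i z. i < n \<Longrightarrow> z \<in> Wc i \<Longrightarrow> z \<in> U \<Longrightarrow> fc i z = \<phi> z i"
    using pc unfolding Wc_def fc_def by auto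
  have "\<forall>f. \<exists>p. f \<in> C \<longrightarrow> (open (fst p) \<and> \<phi> y \<in> fst p \<and> smooth_fun n (snd p) \<and> (\<forall>z\<in>fst p \<inter> \<phi> ` U. f (inv_into U \<phi> z) = snd p z))"
  proof (intro allI)
    fix f
    show "\<exists>p. f \<in> C \<longrightarrow> (open (fst p) \<and> \<phi> y \<in> fst p \<and> smooth_fun n (snd p) \<and> (\<forall>z\<in>fst p \<inter> \<phi> ` U. f (inv_into U \<phi> z) = snd p z))"
    proof (cases "f \<in> C")
      case True
      have "loc_fun C U f" unfolding loc_fun_def using True ctop_open_UNIV by blast
      from ch(6)[OF this] ch(2) obtain W G where "open W" "\<phi> y \<in> W" "smooth_fun n G"
        "\<forall>z\<in>W \<inter> \<phi> ` U. f (inv_into U \<phi> z) = G z"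
        unfolding rn_fun_def by (auto simp: o_def)
      then show ?thesis by (intro exI[of _ "(W, G)"]) auto
    qed auto
  qed
  then obtain pf where pf: "\<And>f. f \<in> C \<Longrightarrow> open (fst (pf f)) \<and> \<phi> y \<in> fst (pf f) \<and> smooth_fun n (snd (pf f)) \<and> (\<forall>z\<in>fst (pf f) \<inter> \<phi> ` U. f (inv_into U \<phi> z) = snd (pf f) z)"
    by metis
  define Gf where "Gf f = snd (pf f)" for f
  define Wf where "Wf f = fst (pf f)" for f
  have Wf: "\<And>f. f \<in> C \<Longrightarrow> open (Wf f)" "\<And>f. f \<in> C \<Longrightarrow> \<phi> y \<in> Wf f"
    and Gf: "\<And>f. f \<in> C \<Longrightarrow> smooth_fun n (Gf f)"
      "\<And>f z. f \<in> C \<Longrightarrow> z \<in> Wf f \<Longrightarrow> z \<in> \<phi> ` U \<Longrightarrow> f (inv_into U \<phi> z) = Gf f z"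
    using pf unfolding Gf_def Wf_def by auto
  define e where "e i = (\<lambda>f. if f \<in> C then partial i (Gf f) (\<phi> y) else 0)" for i
  have rel: "X f y = (\<Sum>i<n. partial i (Gf f) (\<phi> y) * X (fc i) y)" if X: "vector_field C X" and f: "f \<in> C" for X f
  proof -
    obtain \<epsilon> c where c: "\<epsilon> > 0" "c 0 = y"
      "\<And>g t. g \<in> C \<Longrightarrow> t \<in> {0..\<epsilon>} \<Longrightarrow> ((\<lambda>t. g (c t)) has_real_derivative X g (c t)) (at t within {0..\<epsilon>})"
      using get_curve[OF X, of y] by blast
    define J where "J = {0..\<epsilon>}"
    have J0: "(0::real) \<in> J" using c(1) unfolding J_def by simp
    have der0: "\<And>g. g \<in> C \<Longrightarrow> ((\<lambda>t. g (c t)) has_real_derivative X g y) (at 0 within J)"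
      using c J0 unfolding J_def by fastforce
    have contJ: "\<And>g. g \<in> C \<Longrightarrow> continuous_on J (\<lambda>t. g (c t))"
      unfolding continuous_on_eq_continuous_within J_def using c(3) DERIV_continuous by blast
    have lim0: "\<forall>g\<in>C. ((\<lambda>t. g (c t)) \<longlongrightarrow> g y) (at 0 within J)"
      using contJ J0 c(2) unfolding continuous_on_def by fastforce
    define \<Phi> where "\<Phi> t = (\<lambda>i. if i < n then fc i (c t) else 0)" for t
    have \<Phi>n: "\<Phi> t \<in> fvec n" for t unfolding \<Phi>_def fvec_def by auto
    have \<phi>y: "\<phi> y = \<Phi> 0"
    proof (rule ext)
      fix i show "\<phi> y i = \<Phi> 0 i"
      proof (cases "i < n")
        case True then show ?thesis using fc(2)[OF True Wc(2)[OF True] ch(2)] c(2) by (simp add: \<Phi>_def)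
      next
        case False then show ?thesis using ch(2,3) unfolding \<Phi>_def fvec_def by auto
      qed
    qed
    have \<Phi>lim: "(\<Phi> \<longlongrightarrow> \<Phi> 0) (at 0 within J)"
    proof (rule tendsto_fun_coord)
      fix i show "((\<lambda>t. \<Phi> t i) \<longlongrightarrow> \<Phi> 0 i) (at 0 within J)"
        using lim0 fc(1) c(2) by (cases "i < n") (auto simp: \<Phi>_def)
    qed
    have ev1: "\<forall>\<^sub>F t in at 0 within J. c t \<in> U" by (rule eventually_in_open[OF lim0 ch(1,2)])
    have ev2: "\<forall>\<^sub>F t in at 0 within J. \<forall>i\<in>{..<n}. c t \<in> Wc i"
      by (rule eventually_ball_finite) (auto intro: eventually_in_open[OF lim0] Wc)
    have ev3: "\<forall>\<^sub>F t in at 0 within J. \<Phi> t \<in> Wf f"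
      using topological_tendstoD[OF \<Phi>lim Wf(1)[OF f]] Wf(2)[OF f] \<phi>y by simp
    have key: "f (c t) = Gf f (\<Phi> t)" if t: "c t \<in> U" "\<forall>i\<in>{..<n}. c t \<in> Wc i" "\<Phi> t \<in> Wf f" for t
    proof -
      have "\<phi> (c t) = \<Phi> t"
      proof (rule ext)
        fix i show "\<phi> (c t) i = \<Phi> t i"
        proof (cases "i < n")
          case True then show ?thesis using fc(2)[OF True _ t(1)] t(2) by (simp add: \<Phi>_def)
        next
          case False then show ?thesis using t(1) ch(3) unfolding \<Phi>_def fvec_def by auto
        qed
      qed
      then have "f (c t) = f (inv_into U \<phi> (\<Phi> t))" using inv_into_f_f[OF ch(4) t(1)] by simp
      also have "\<dots> = Gf f (\<Phi> t)" using Gf(2)[OF f t(3)] \<open>\<phi> (c t) = \<Phi> t\<close> t(1) by (metis imageI)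
      finally show ?thesis .
    qed
    have ev: "\<forall>\<^sub>F t in at 0 within J. f (c t) = Gf f (\<Phi> t)"
      using ev1 ev2 ev3 by eventually_elim (rule key)
    have at0: "f (c 0) = Gf f (\<Phi> 0)"
      using key[of 0] c(2) ch(2) Wc(2) Wf(2)[OF f] \<phi>y by auto
    have G1: "Gf f \<in> Ck n (Suc 0)" using Gf(1)[OF f] unfolding smooth_fun_def by blast
    have dd: "((\<lambda>t. \<Phi> t i) has_real_derivative X (fc i) y) (at 0 within J)" if "i < n" for i
      using der0[OF fc(1)[OF that]] that by (simp add: \<Phi>_def)
    have chain: "((\<lambda>t. Gf f (\<Phi> t)) has_real_derivative (\<Sum>i<n. partial i (Gf f) (\<Phi> 0) * X (fc i) y)) (at 0 within J)"
      by (rule chain_C1[OF G1 \<Phi>n dd])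
    have A: "((\<lambda>t. (f (c t) - f (c 0)) / (t - 0)) \<longlongrightarrow> X f y) (at 0 within J)"
      using der0[OF f] unfolding has_field_derivative_iff .
    have B: "((\<lambda>t. (f (c t) - f (c 0)) / (t - 0)) \<longlongrightarrow> (\<Sum>i<n. partial i (Gf f) (\<Phi> 0) * X (fc i) y)) (at 0 within J)"
    proof -
      have "((\<lambda>t. (Gf f (\<Phi> t) - Gf f (\<Phi> 0)) / (t - 0)) \<longlongrightarrow> (\<Sum>i<n. partial i (Gf f) (\<Phi> 0) * X (fc i) y)) (at 0 within J)"
        using chain unfolding has_field_derivative_iff .
      then show ?thesis
        by (rule tendsto_cong[THEN iffD1, rotated]) (use ev at0 in \<open>auto elim: eventually_mono\<close>)
    qed
    have nb: "at (0::real) within J \<noteq> bot"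
      unfolding not_trivial_limit_within_ball
    proof (intro allI impI)
      fix r :: real assume r: "r > 0"
      have "min (r/2) \<epsilon> \<in> J \<inter> ball 0 r - {0}" using r c(1) by (auto simp: J_def dist_real_def)
      then show "J \<inter> ball 0 r - {0} \<noteq> {}" by blast
    qed
    from tendsto_unique[OF nb A B] show ?thesis using \<phi>y by simp
  qed
  show ?thesis
  proof (intro exI conjI allI impI)
    show "finite (e ` {..<n})" by simp
    fix X assume X: "vector_field C X"
    have "tvec C X y = (\<Sum>i<n. (\<lambda>(a::real) v f. a * v f) (X (fc i) y) (e i))"
    proof (rule ext)
      fix f
      show "tvec C X y f = (\<Sum>i<n. (\<lambda>(a::real) v f. a * v f) (X (fc i) y) (e i)) f"
        unfolding fun_sum_apply tvec_def e_def
        using rel[OF X, of f] by (auto simp: mult.commute)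
    qed
    also have "\<dots> \<in> fs.span (e ` {..<n})"
      by (intro fs.span_sum fs.span_scale fs.span_base) auto
    finally show "tvec C X y \<in> fs.span (e ` {..<n})" .
  qed
qed


lemma dim_witness: "\<exists>B. B \<subseteq> V \<and> fs.independent B \<and> fs.dim V = card B"
proof -
  obtain B where B: "B \<subseteq> V" "fs.independent B" "V \<subseteq> fs.span B"
    using fs.maximal_independent_subset by blast
  have "fs.span B = fs.span V"
  proof -
    have "B \<subseteq> fs.span V" using B(1) fs.span_superset by blast
    then show ?thesis using B(3) fs.span_eq by blast
  qed
  then have "fs.dim V = card B" using fs.dim_eq_card B(2) by blast
  then show ?thesis using B by blast
qed

lemma dim_ge:
  assumes "fs.independent S" "S \<subseteq> V" "finite E" "V \<subseteq> fs.span E"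
  shows "card S \<le> fs.dim V"
proof -
  obtain B where B: "B \<subseteq> V" "fs.independent B" "V \<subseteq> fs.span B"
    using fs.maximal_independent_subset by blast
  have "finite B" using fs.independent_span_bound[OF assms(3) B(2)] B(1) assms(4) by blast
  have "fs.span B = fs.span V"
  proof -
    have "B \<subseteq> fs.span V" using B(1) fs.span_superset by blast
    then show ?thesis using B(3) fs.span_eq by blast
  qed
  then have d: "fs.dim V = card B" using fs.dim_eq_card B(2) by blast
  have "card S \<le> card B" using fs.independent_span_bound[OF \<open>finite B\<close> assms(1)] assms(2) B(3) by blast
  then show ?thesis using d by simp
qed


theorem lemmal:
  fixes C :: "('a \<Rightarrow> real) set"
    and F :: "(('a \<Rightarrow> real) \<Rightarrow> ('a \<Rightarrow> real)) set"
  assumes "subcartesian C"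
    and "\<forall>X\<in>F. vector_field C X"
  shows "lower_semicontinuous (ctop C) (delta C F)"
  unfolding lower_semicontinuous_def
proof (intro ballI allI impI)
  fix x :: 'a and r :: real
  assume r: "r < real_of_int (delta C F x)"
  define V where "V z = {tvec C X z | X. X \<in> F}" for z
  have dl: "delta C F z = int (fs.dim (V z))" for z unfolding delta_def V_def by simp
  obtain B where B: "B \<subseteq> V x" "fs.independent B" "fs.dim (V x) = card B"
    using dim_witness by blast
  show "\<exists>U. openin (ctop C) U \<and> x \<in> U \<and> (\<forall>y\<in>U. r < real_of_int (delta C F y))"
  proof (cases "finite B")
    case False
    then have "r < 0" using r B(3) by (simp add: dl)
    then show ?thesis by (intro exI[of _ UNIV]) (auto simp: ctop_open_UNIV dl)
  next
    case True
    define k where "k = card B"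
    obtain b where b: "bij_betw b {..<k} B"
      using ex_bij_betw_nat_finite[OF True] unfolding k_def by (metis atLeast0LessThan)
    have "\<forall>j. \<exists>X. j < k \<longrightarrow> X \<in> F \<and> b j = tvec C X x"
    proof
      fix j
      show "\<exists>X. j < k \<longrightarrow> X \<in> F \<and> b j = tvec C X x"
      proof (cases "j < k")
        case True
        then have "b j \<in> B" using bij_betw_apply[OF b] by simp
        then have "b j \<in> V x" using B(1) by blast
        then show ?thesis unfolding V_def by auto
      qed simp
    qed
    from choice[OF this] obtain Xs where Xs0: "\<forall>j. j < k \<longrightarrow> Xs j \<in> F \<and> b j = tvec C (Xs j) x" ..
    have Xs: "\<And>j. j < k \<Longrightarrow> Xs j \<in> F" "\<And>j. j < k \<Longrightarrow> b j = tvec C (Xs j) x"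
      using Xs0 by simp_all
    have der: "Xs j f \<in> C" if j: "j < k" and f: "f \<in> C" for j f
    proof -
      have "vector_field C (Xs j)" using assms(2) Xs(1)[OF j] by simp
      then have "derivation C (Xs j)" by (simp add: vector_field_def)
      then show ?thesis using f unfolding derivation_def by simp
    qed
    have cont: "\<forall>j<k. \<forall>f\<in>C. continuous_map (subtopology (ctop C) UNIV) euclideanreal (\<lambda>y. Xs j f y)"
    proof -
      have "subtopology (ctop C) UNIV = ctop C" using subtopology_topspace[of "ctop C"] by simp
      then show ?thesis by (simp add: der continuous_C)
    qed
    have indx: "\<forall>a. (\<forall>f\<in>C. (\<Sum>j<k. a j * Xs j f x) = 0) \<longrightarrow> (\<forall>j<k. a j = 0)"
    proof (rule allI, rule impI)
      fix a assume H: "\<forall>f\<in>C. (\<Sum>j<k. a j * Xs j f x) = 0"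
      have s0: "(\<Sum>j<k. (\<lambda>(a::real) v f. a * v f) (a j) (b j)) = 0"
      proof (rule ext)
        fix f
        have "(\<Sum>j<k. (\<lambda>(a::real) v f. a * v f) (a j) (b j)) f = (\<Sum>j<k. a j * b j f)"
          by (simp add: fun_sum_apply)
        also have "\<dots> = 0"
        proof (cases "f \<in> C")
          case True
          have "(\<Sum>j<k. a j * b j f) = (\<Sum>j<k. a j * Xs j f x)"
            by (rule sum.cong) (simp_all add: Xs(2) tvec_def True)
          then show ?thesis using H True by simp
        next
          case False
          then show ?thesis by (simp add: Xs(2) tvec_def)
        qed
        finally show "(\<Sum>j<k. (\<lambda>(a::real) v f. a * v f) (a j) (b j)) f = 0 f" by simp
      qed
      define u where "u v = a (inv_into {..<k} b v)" for v
      have inj: "inj_on b {..<k}" using bij_betw_imp_inj_on[OF b] .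
      have "(\<Sum>v\<in>B. (\<lambda>(a::real) v f. a * v f) (u v) v) = (\<Sum>j<k. (\<lambda>(a::real) v f. a * v f) (u (b j)) (b j))"
        using sum.reindex_bij_betw[OF b, of "\<lambda>v. (\<lambda>(a::real) v f. a * v f) (u v) v"] by simp
      also have "\<dots> = (\<Sum>j<k. (\<lambda>(a::real) v f. a * v f) (a j) (b j))"
        by (rule sum.cong) (simp_all add: u_def inv_into_f_f[OF inj])
      finally have "(\<Sum>v\<in>B. (\<lambda>(a::real) v f. a * v f) (u v) v) = (\<Sum>j<k. (\<lambda>(a::real) v f. a * v f) (a j) (b j))" .
      with s0 have "(\<Sum>v\<in>B. (\<lambda>(a::real) v f. a * v f) (u v) v) = 0" by simp
      then have "\<forall>v\<in>B. u v = 0"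
      proof -
        assume sB: "(\<Sum>v\<in>B. (\<lambda>(a::real) v f. a * v f) (u v) v) = 0"
        show "\<forall>v\<in>B. u v = 0"
        proof (rule ccontr)
          assume "\<not> (\<forall>v\<in>B. u v = 0)"
          then have ne: "\<exists>v\<in>B. u v \<noteq> 0" by simp
          have "fs.dependent B" unfolding fs.dependent_finite[OF True]
          proof (intro exI[of _ u] conjI)
            show "\<exists>v\<in>B. u v \<noteq> 0" by (rule ne)
            show "(\<Sum>v\<in>B. (\<lambda>(a::real) v f. a * v f) (u v) v) = 0" by (rule sB)
          qed
          with B(2) show False by simp
        qed
      qed
      then show "\<forall>j<k. a j = 0"
        using b unfolding bij_betw_def u_def by (auto simp: inv_into_f_f[OF inj])
    qed
    obtain U where U: "openin (ctop C) U" "x \<in> U"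
      "\<forall>y\<in>U. \<forall>a. (\<forall>f\<in>C. (\<Sum>j<k. a j * Xs j f y) = 0) \<longrightarrow> (\<forall>j<k. a j = 0)"
      using indep_open[OF ctop_open_UNIV UNIV_I cont indx] by blast
    show ?thesis
    proof (intro exI conjI ballI)
      show "openin (ctop C) U" "x \<in> U" by fact+
      fix y assume y: "y \<in> U"
      define bv where "bv j = tvec C (Xs j) y" for j
      have indy: "\<forall>a. (\<forall>f\<in>C. (\<Sum>j<k. a j * Xs j f y) = 0) \<longrightarrow> (\<forall>j<k. a j = 0)"
        using U(3) y by blast
      have inj: "inj_on bv {..<k}"
      proof (rule inj_onI)
        fix j1 j2 assume j: "j1 \<in> {..<k}" "j2 \<in> {..<k}" "bv j1 = bv j2"
        show "j1 = j2"
        proof (rule ccontr)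
          assume ne: "j1 \<noteq> j2"
          define a where "a j = (if j = j1 then 1 else if j = j2 then -1 else (0::real))" for j
          have "\<forall>f\<in>C. (\<Sum>j<k. a j * Xs j f y) = 0"
          proof
            fix f assume f: "f \<in> C"
            have "tvec C (Xs j1) y f = tvec C (Xs j2) y f" using j(3) unfolding bv_def by simp
            then have e: "Xs j1 f y = Xs j2 f y" using f by (simp add: tvec_def)
            have "(\<Sum>j<k. a j * Xs j f y) = (\<Sum>j\<in>{j1,j2}. a j * Xs j f y)"
              by (rule sum.mono_neutral_right) (use j in \<open>auto simp: a_def\<close>)
            also have "\<dots> = 0" using ne e by (simp add: a_def)
            finally show "(\<Sum>j<k. a j * Xs j f y) = 0" .
          qed
          with indy[rule_format, of a] j(1) have "a j1 = 0" by simp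
          then show False by (simp add: a_def)
        qed
      qed
      define B' where "B' = bv ` {..<k}"
      have cardB': "card B' = k" unfolding B'_def using card_image[OF inj] by simp
      have finB': "finite B'" unfolding B'_def by simp
      have B'V: "B' \<subseteq> V y"
      proof
        fix v assume "v \<in> B'"
        then obtain j where j: "v = bv j" "j \<in> {..<k}" unfolding B'_def by (rule imageE)
        then have jk: "j < k" by simp
        have "tvec C (Xs j) y \<in> V y" unfolding V_def using Xs(1)[OF jk] by blast
        then show "v \<in> V y" using j(1) by (simp add: bv_def)
      qed
      have indB': "fs.independent B'"
      proof
        assume "fs.dependent B'"
        then have "\<exists>u. (\<exists>v\<in>B'. u v \<noteq> 0) \<and> (\<Sum>v\<in>B'. (\<lambda>(a::real) v f. a * v f) (u v) v) = 0"
          unfolding fs.dependent_finite[OF finB'] .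
        then obtain u where u0: "(\<exists>v\<in>B'. u v \<noteq> 0) \<and> (\<Sum>v\<in>B'. (\<lambda>(a::real) v f. a * v f) (u v) v) = 0" ..
        have u: "\<exists>v\<in>B'. u v \<noteq> 0" "(\<Sum>v\<in>B'. (\<lambda>(a::real) v f. a * v f) (u v) v) = 0"
          using u0 by simp_all
        have bij': "bij_betw bv {..<k} B'" unfolding B'_def by (rule inj_on_imp_bij_betw[OF inj])
        have s: "(\<Sum>j<k. (\<lambda>(a::real) v f. a * v f) (u (bv j)) (bv j)) = 0"
          using sum.reindex_bij_betw[OF bij', of "\<lambda>v. (\<lambda>(a::real) v f. a * v f) (u v) v"] u(2) by simp
        have "\<forall>f\<in>C. (\<Sum>j<k. u (bv j) * Xs j f y) = 0"
        proof
          fix f assume f: "f \<in> C"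
          have "(\<Sum>j<k. (\<lambda>(a::real) v f. a * v f) (u (bv j)) (bv j)) f = 0" using s by simp
          then show "(\<Sum>j<k. u (bv j) * Xs j f y) = 0"
            unfolding fun_sum_apply using f by (simp add: bv_def tvec_def)
        qed
        then have "\<forall>j<k. u (bv j) = 0" using indy[rule_format, of "\<lambda>j. u (bv j)"] by blast
        with u(1) show False unfolding B'_def by auto
      qed
      obtain E where E: "finite E" "\<forall>X. vector_field C X \<longrightarrow> tvec C X y \<in> fs.span E"
        using tangent_rel[OF assms(1)] by blast
      have "V y \<subseteq> fs.span E"
      proof
        fix v assume "v \<in> V y"
        then obtain X where X: "X \<in> F" "v = tvec C X y" unfolding V_def by blast
        then show "v \<in> fs.span E" using E(2) assms(2) by simp
      qed
      from dim_ge[OF indB' B'V E(1) this] cardB' have "k \<le> fs.dim (V y)" by simp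
      moreover have "r < k" using r B(3) by (simp add: dl k_def)
      ultimately show "r < real_of_int (delta C F y)" by (simp add: dl)
    qed
  qed
qed


end
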